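(* Let $T$ be a prae-dilator and let $(X,\iota_X,L_X)$ be a Bachmann-Howard system for $T$, and let $\vartheta_X:T_X\to\vartheta_T(X)$ be given by $\vartheta_X(\sigma)=\vartheta\sigma$. Then for all $\sigma,\tau\in T_X$: (i) if $\sigma<_{T_X}\tau$ and $[\iota_X]^{<\omega}(\operatorname{supp}^T_X(\sigma))<^{\operatorname{fin}}_{\vartheta_T(X)}\vartheta_X(\tau)$, then $\vartheta_X(\sigma)<_{\vartheta_T(X)}\vartheta_X(\tau)$; (ii) $[\iota_X]^{<\omega}(\operatorname{supp}^T_X(\sigma))<^{\operatorname{fin}}_{\vartheta_T(X)}\vartheta_X(\sigma)$.
   Context: The finite subset functor $[\cdot]^{<\omega}$ sends a set $X$ to the set of its finite subsets and a function $f$ to $[f]^{<\omega}(a)=\{f(x)\mid x\in a\}$; subsets of linear orders are regarded as suborders. A prae-dilator consists of an endofunctor $X\mapsto T_X$ on the category of linear orders (morphisms: order embeddings) and a natural transformation $\operatorname{supp}^T:T\Rightarrow[\cdot]^{<\omega}$ such that for every linear order $X$ and every $\sigma\in T_X$ we have $\sigma\in\operatorname{rng}(T_{\iota_\sigma})$, where $\iota_\sigma:\operatorname{supp}^T_X(\sigma)\hookrightarrow X$ is the inclusion. For a linear order $Z$ and finite $a,b\subseteq Z$ write $a<^{\operatorname{fin}}_Z b$ iff for every $s\in a$ there is $t\in b$ with $s<_Z t$; $\leq^{\operatorname{fin}}_Z$ is defined analogously with $\leq_Z$; singletons $\{s\}$ are written $s$. For a linear order $X$ let $\vartheta_T(X)$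 be the set of formal terms $\vartheta\sigma$ with $\sigma\in T_X$. A Bachmann-Howard system (for $T$) is a triple $(X,\iota_X,L_X)$ with $X$ a linear order, $\iota_X:X\to\vartheta_T(X)$ and $L_X:X\to\omega$ functions, such that $L_{\vartheta_T(X)}\circ\iota_X=L_X$, where $L_{\vartheta_T(X)}(\vartheta\sigma):=\max\{L_X(x)\mid x\in\operatorname{supp}^T_X(\sigma)\}+1$ (maximum of the empty set is $0$). For such a system the linear order $\vartheta\sigma<_{\vartheta_T(X)}\vartheta\tau$ is defined by recursion on $L_{\vartheta_T(X)}(\vartheta\sigma)+L_{\vartheta_T(X)}(\vartheta\tau)$ to hold iff either (a) $\sigma<_{T_X}\tau$ and $[\iota_X]^{<\omega}(\operatorname{supp}^T_X(\sigma))<^{\operatorname{fin}}_{\vartheta_T(X)}\vartheta\tau$, or (b) $\tau<_{T_X}\sigma$ and $\vartheta\sigma\leq^{\operatorname{fin}}_{\vartheta_T(X)}[\iota_X]^{<\omega}(\operatorname{supp}^T_X(\tau))$. *)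

theory Defs
  imports Main
begin

text \<open>Linear orders are represented as reflexive relations r with carrier Field r
  (library notion Linear_order). Objects of the category are the linear orders whose
  carriers are subsets of a fixed type 'a; the values T_X live in a fixed type 'b.\<close>

definition order_emb :: "'a rel \<Rightarrow> 'c rel \<Rightarrow> ('a \<Rightarrow> 'c) \<Rightarrow> bool" where
  "order_emb r s f \<longleftrightarrow> (\<forall>x\<in>Field r. f x \<in> Field s) \<and>
     (\<forall>x\<in>Field r. \<forall>y\<in>Field r. (x, y) \<in> r \<longleftrightarrow> (f x, f y) \<in> s)"

text \<open>A prae-dilator: object part T, morphism part Tm (T applied to the embedding f : r \<rightarrow> s),
  and the support transformation supp.\<close>
definition prae_dilator ::
  "('a rel \<Rightarrow> 'b rel) \<Rightarrow> ('a rel \<Rightarrow> 'a rel \<Rightarrow> ('a \<Rightarrow> 'a) \<Rightarrow> 'b \<Rightarrow> 'b) \<Rightarrow> ('a rel \<Rightarrow> 'b \<Rightarrow> 'a set) \<Rightarrow> bool" where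
  "prae_dilator T Tm supp \<longleftrightarrow>
    (\<forall>r. Linear_order r \<longrightarrow> Linear_order (T r)) \<and>
    (\<forall>r s f. Linear_order r \<and> Linear_order s \<and> order_emb r s f \<longrightarrow> order_emb (T r) (T s) (Tm r s f)) \<and>
    (\<forall>r s f g. Linear_order r \<and> Linear_order s \<and> order_emb r s f \<and> (\<forall>x\<in>Field r. f x = g x)
        \<longrightarrow> (\<forall>\<sigma>\<in>Field (T r). Tm r s f \<sigma> = Tm r s g \<sigma>)) \<and>
    (\<forall>r. Linear_order r \<longrightarrow> (\<forall>\<sigma>\<in>Field (T r). Tm r r id \<sigma> = \<sigma>)) \<and>
    (\<forall>r s t f g. Linear_order r \<and> Linear_order s \<and> Linear_order t \<and> order_emb r s f \<and> order_emb s t g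
        \<longrightarrow> (\<forall>\<sigma>\<in>Field (T r). Tm r t (g \<circ> f) \<sigma> = Tm s t g (Tm r s f \<sigma>))) \<and>
    (\<forall>r. Linear_order r \<longrightarrow> (\<forall>\<sigma>\<in>Field (T r). finite (supp r \<sigma>) \<and> supp r \<sigma> \<subseteq> Field r)) \<and>
    (\<forall>r s f. Linear_order r \<and> Linear_order s \<and> order_emb r s f
        \<longrightarrow> (\<forall>\<sigma>\<in>Field (T r). supp s (Tm r s f \<sigma>) = f ` supp r \<sigma>)) \<and>
    (\<forall>r. Linear_order r \<longrightarrow> (\<forall>\<sigma>\<in>Field (T r).
        \<sigma> \<in> Tm (Restr r (supp r \<sigma>)) r id ` Field (T (Restr r (supp r \<sigma>)))))"

datatype 'b vartheta = Vt 'b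

definition fin_less :: "('c \<Rightarrow> 'c \<Rightarrow> bool) \<Rightarrow> 'c set \<Rightarrow> 'c set \<Rightarrow> bool" where
  "fin_less lt a b \<longleftrightarrow> (\<forall>s\<in>a. \<exists>t\<in>b. lt s t)"

definition fin_le :: "('c \<Rightarrow> 'c \<Rightarrow> bool) \<Rightarrow> 'c set \<Rightarrow> 'c set \<Rightarrow> bool" where
  "fin_le lt a b \<longleftrightarrow> (\<forall>s\<in>a. \<exists>t\<in>b. lt s t \<or> s = t)"

definition Lth :: "('b \<Rightarrow> 'a set) \<Rightarrow> ('a \<Rightarrow> nat) \<Rightarrow> 'b vartheta \<Rightarrow> nat" where
  "Lth S L t = (case t of Vt \<sigma> \<Rightarrow> (if S \<sigma> = {} then 0 else Max (L ` S \<sigma>)) + 1)"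

text \<open>The recursive clauses (a)/(b), unfolded with an explicit recursion depth k.\<close>
primrec th_less_fuel :: "nat \<Rightarrow> 'b rel \<Rightarrow> ('b \<Rightarrow> 'a set) \<Rightarrow> ('a \<Rightarrow> 'b vartheta)
    \<Rightarrow> 'b vartheta \<Rightarrow> 'b vartheta \<Rightarrow> bool" where
  "th_less_fuel 0 TX S \<iota> a b = False"
| "th_less_fuel (Suc k) TX S \<iota> a b = (case (a, b) of (Vt \<sigma>, Vt \<tau>) \<Rightarrow>
      ((\<sigma>, \<tau>) \<in> TX \<and> \<sigma> \<noteq> \<tau> \<and> fin_less (th_less_fuel k TX S \<iota>) (\<iota> ` S \<sigma>) {Vt \<tau>}) \<or>
      ((\<tau>, \<sigma>) \<in> TX \<and> \<tau> \<noteq> \<sigma> \<and> fin_le (th_less_fuel k TX S \<iota>) {Vt \<sigma>} (\<iota> ` S \<tau>)))"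

text \<open>The order on \<vartheta>_T(X): recursion on L(\<vartheta>\<sigma>) + L(\<vartheta>\<tau>) (depth one more than this sum
  suffices for every recursive call in a Bachmann-Howard system).\<close>
definition theta_less :: "'b rel \<Rightarrow> ('b \<Rightarrow> 'a set) \<Rightarrow> ('a \<Rightarrow> 'b vartheta) \<Rightarrow> ('a \<Rightarrow> nat)
    \<Rightarrow> 'b vartheta \<Rightarrow> 'b vartheta \<Rightarrow> bool" where
  "theta_less TX S \<iota> L a b = th_less_fuel (Lth S L a + Lth S L b + 1) TX S \<iota> a b"

definition BH_system :: "('a rel \<Rightarrow> 'b rel) \<Rightarrow> ('a rel \<Rightarrow> 'b \<Rightarrow> 'a set) \<Rightarrow> 'a rel
    \<Rightarrow> ('a \<Rightarrow> 'b vartheta) \<Rightarrow> ('a \<Rightarrow> nat) \<Rightarrow> bool" where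
  "BH_system T supp r \<iota> L \<longleftrightarrow> Linear_order r \<and>
     (\<forall>x\<in>Field r. \<iota> x \<in> Vt ` Field (T r)) \<and>
     (\<forall>x\<in>Field r. Lth (supp r) L (\<iota> x) = L x)"

end

theory Submission
  imports Defs
begin

lemma stab:
  assumes A1: "\<forall>\<sigma>\<in>F. \<forall>x\<in>S \<sigma>. \<iota> x \<in> Vt ` F \<and> Lth S L (\<iota> x) < Lth S L (Vt \<sigma>)"
  shows "\<forall>a b k'. a \<in> Vt ` F \<longrightarrow> b \<in> Vt ` F \<longrightarrow> Lth S L a + Lth S L b < k \<longrightarrow> k \<le> k'
     \<longrightarrow> th_less_fuel k TX S \<iota> a b = th_less_fuel k' TX S \<iota> a b"
proof (induction k)
  case 0
  then show ?case by simp
next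
  case (Suc k)
  show ?case
  proof (intro allI impI)
    fix a b k'
    assume a: "a \<in> Vt ` F" and b: "b \<in> Vt ` F" and lt: "Lth S L a + Lth S L b < Suc k"
      and le: "Suc k \<le> k'"
    obtain \<sigma> where s: "\<sigma> \<in> F" "a = Vt \<sigma>" using a by blast
    obtain \<tau> where t: "\<tau> \<in> F" "b = Vt \<tau>" using b by blast
    obtain k'' where k': "k' = Suc k''" "k \<le> k''" using le by (cases k') auto
    have e1: "fin_less (th_less_fuel k TX S \<iota>) (\<iota> ` S \<sigma>) {Vt \<tau>} =
              fin_less (th_less_fuel k'' TX S \<iota>) (\<iota> ` S \<sigma>) {Vt \<tau>}"
    proof -
      have "\<forall>x\<in>S \<sigma>. th_less_fuel k TX S \<iota> (\<iota> x) (Vt \<tau>) = th_less_fuel k'' TX S \<iota> (\<iota> x) (Vt \<tau>)"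
      proof
        fix x assume x: "x \<in> S \<sigma>"
        have "\<iota> x \<in> Vt ` F" "Lth S L (\<iota> x) < Lth S L (Vt \<sigma>)" using A1 s x by auto
        then show "th_less_fuel k TX S \<iota> (\<iota> x) (Vt \<tau>) = th_less_fuel k'' TX S \<iota> (\<iota> x) (Vt \<tau>)"
        proof -
          assume h1: "\<iota> x \<in> Vt ` F" and h2: "Lth S L (\<iota> x) < Lth S L (Vt \<sigma>)"
          have "Lth S L (\<iota> x) + Lth S L (Vt \<tau>) < k" using h2 lt s t by simp
          then show ?thesis using Suc.IH h1 t k' by blast
        qed
      qed
      then show ?thesis unfolding fin_less_def by auto
    qed
    have e2: "fin_le (th_less_fuel k TX S \<iota>) {Vt \<sigma>} (\<iota> ` S \<tau>) =
              fin_le (th_less_fuel k'' TX S \<iota>) {Vt \<sigma>} (\<iota> ` S \<tau>)"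
    proof -
      have "\<forall>x\<in>S \<tau>. th_less_fuel k TX S \<iota> (Vt \<sigma>) (\<iota> x) = th_less_fuel k'' TX S \<iota> (Vt \<sigma>) (\<iota> x)"
      proof
        fix x assume x: "x \<in> S \<tau>"
        have "\<iota> x \<in> Vt ` F" "Lth S L (\<iota> x) < Lth S L (Vt \<tau>)" using A1 t x by auto
        then show "th_less_fuel k TX S \<iota> (Vt \<sigma>) (\<iota> x) = th_less_fuel k'' TX S \<iota> (Vt \<sigma>) (\<iota> x)"
        proof -
          assume h1: "\<iota> x \<in> Vt ` F" and h2: "Lth S L (\<iota> x) < Lth S L (Vt \<tau>)"
          have "Lth S L (Vt \<sigma>) + Lth S L (\<iota> x) < k" using h2 lt s t by simp
          then show ?thesis using Suc.IH h1 s k' by blast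
        qed
      qed
      then show ?thesis unfolding fin_le_def by auto
    qed
    show "th_less_fuel (Suc k) TX S \<iota> a b = th_less_fuel k' TX S \<iota> a b"
      using e1 e2 s t k' by simp
  qed
qed

inductive hsub :: "'b set \<Rightarrow> ('b \<Rightarrow> 'a set) \<Rightarrow> ('a \<Rightarrow> 'b vartheta) \<Rightarrow> 'b vartheta \<Rightarrow> 'b vartheta \<Rightarrow> bool"
  for F S \<iota> where
  base: "\<sigma> \<in> F \<Longrightarrow> x \<in> S \<sigma> \<Longrightarrow> hsub F S \<iota> (\<iota> x) (Vt \<sigma>)"
| step: "\<sigma> \<in> F \<Longrightarrow> x \<in> S \<sigma> \<Longrightarrow> hsub F S \<iota> a (\<iota> x) \<Longrightarrow> hsub F S \<iota> a (Vt \<sigma>)"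

lemma hsub_trans: "hsub F S \<iota> a b \<Longrightarrow> hsub F S \<iota> c a \<Longrightarrow> hsub F S \<iota> c b"
  by (induction rule: hsub.induct) (auto intro: hsub.step)

lemma hsub_props:
  assumes A1: "\<forall>\<sigma>\<in>F. \<forall>x\<in>S \<sigma>. \<iota> x \<in> Vt ` F \<and> Lth S L (\<iota> x) < Lth S L (Vt \<sigma>)"
  shows "hsub F S \<iota> a b \<Longrightarrow> a \<in> Vt ` F \<and> b \<in> Vt ` F \<and> Lth S L a < Lth S L b"
  by (induction rule: hsub.induct) (use A1 in force)+

lemma main:
  assumes A1: "\<forall>\<sigma>\<in>F. \<forall>x\<in>S \<sigma>. \<iota> x \<in> Vt ` F \<and> Lth S L (\<iota> x) < Lth S L (Vt \<sigma>)"
    and tot: "\<forall>\<sigma>\<in>F. \<forall>\<rho>\<in>F. \<sigma> \<noteq> \<rho> \<longrightarrow> (\<sigma>, \<rho>) \<in> TX \<or> (\<rho>, \<sigma>) \<in> TX"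
  shows "\<forall>a b. Lth S L a + Lth S L b = n \<longrightarrow> hsub F S \<iota> a b \<longrightarrow> theta_less TX S \<iota> L a b"
proof (induction n rule: less_induct)
  case (less n)
  show ?case
  proof (intro allI impI)
    fix a b assume n: "Lth S L a + Lth S L b = n" and h: "hsub F S \<iota> a b"
    note hp = hsub_props[OF A1 h]
    obtain \<rho> where r: "\<rho> \<in> F" "a = Vt \<rho>" using hp by blast
    obtain \<sigma> where s: "\<sigma> \<in> F" "b = Vt \<sigma>" using hp by blast
    have ne: "\<rho> \<noteq> \<sigma>" using hp r s by auto
    have unf: "theta_less TX S \<iota> L a b = th_less_fuel (Suc n) TX S \<iota> a b"
      unfolding theta_less_def using n by simp
    have stabn: "theta_less TX S \<iota> L c d = th_less_fuel n TX S \<iota> c d"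
      if "c \<in> Vt ` F" "d \<in> Vt ` F" "Lth S L c + Lth S L d < n" for c d
      unfolding theta_less_def using stab[OF A1, of "Lth S L c + Lth S L d + 1" TX] that by auto
    from tot r s ne consider "(\<sigma>, \<rho>) \<in> TX" | "(\<rho>, \<sigma>) \<in> TX" by blast
    then show "theta_less TX S \<iota> L a b"
    proof cases
      case 1
      have "fin_le (th_less_fuel n TX S \<iota>) {Vt \<rho>} (\<iota> ` S \<sigma>)"
        unfolding fin_le_def
      proof
        fix u assume "u \<in> {Vt \<rho>}"
        then have u: "u = a" using r by simp
        from h s show "\<exists>t\<in>\<iota> ` S \<sigma>. th_less_fuel n TX S \<iota> u t \<or> u = t"
        proof (cases rule: hsub.cases)
          case (base \<sigma>' x)
          then show ?thesis using u s by auto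
        next
          case (step \<sigma>' x)
          have ss: "\<sigma>' = \<sigma>" using step s by auto
          have xs: "x \<in> S \<sigma>" using step ss by auto
          have hx: "hsub F S \<iota> a (\<iota> x)" using step by auto
          note hp2 = hsub_props[OF A1 hx]
          have "Lth S L (\<iota> x) < Lth S L (Vt \<sigma>)" using A1 s(1) xs by blast
          then have lt2: "Lth S L a + Lth S L (\<iota> x) < n" using s(2) n by simp
          then have "theta_less TX S \<iota> L a (\<iota> x)" using less.IH hx by blast
          moreover have "\<iota> x \<in> Vt ` F" "a \<in> Vt ` F" using hp2 by auto
          ultimately have "th_less_fuel n TX S \<iota> a (\<iota> x)"
            using stabn lt2 by simp
          then show ?thesis using u xs by blast
        qed
      qed
      then show ?thesis using unf r s 1 ne by simp
    next
      case 2
      have "fin_less (th_less_fuel n TX S \<iota>) (\<iota> ` S \<rho>) {Vt \<sigma>}"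
        unfolding fin_less_def
      proof
        fix u assume "u \<in> \<iota> ` S \<rho>"
        then obtain y where y: "y \<in> S \<rho>" "u = \<iota> y" by blast
        have hy: "hsub F S \<iota> u b" using hsub_trans[OF h] hsub.base[of \<rho> F y S \<iota>, OF r(1) y(1)] r y by simp
        note hp3 = hsub_props[OF A1 hy]
        have "Lth S L u < Lth S L a" using hsub_props[OF A1 hsub.base[of \<rho> F y S \<iota>, OF r(1) y(1)]] r y by simp
        then have lt: "Lth S L u + Lth S L b < n" using n by simp
        then have "theta_less TX S \<iota> L u b" using less.IH hy by blast
        then have "th_less_fuel n TX S \<iota> u b" using stabn hp3 lt by simp
        then show "\<exists>t\<in>{Vt \<sigma>}. th_less_fuel n TX S \<iota> u t" using s by simp
      qed
      then show ?thesis using unf r s 2 ne by simp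
    qed
  qed
qed

theorem proposition3p6:
  fixes T :: "'a rel \<Rightarrow> 'b rel" and Tm :: "'a rel \<Rightarrow> 'a rel \<Rightarrow> ('a \<Rightarrow> 'a) \<Rightarrow> 'b \<Rightarrow> 'b"
    and supp :: "'a rel \<Rightarrow> 'b \<Rightarrow> 'a set" and r :: "'a rel"
    and \<iota> :: "'a \<Rightarrow> 'b vartheta" and L :: "'a \<Rightarrow> nat"
  assumes "prae_dilator T Tm supp"
    and "BH_system T supp r \<iota> L"
  shows "\<forall>\<sigma>\<in>Field (T r). \<forall>\<tau>\<in>Field (T r).
     (((\<sigma>, \<tau>) \<in> T r \<and> \<sigma> \<noteq> \<tau> \<and> fin_less (theta_less (T r) (supp r) \<iota> L) (\<iota> ` supp r \<sigma>) {Vt \<tau>})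
        \<longrightarrow> theta_less (T r) (supp r) \<iota> L (Vt \<sigma>) (Vt \<tau>)) \<and>
     fin_less (theta_less (T r) (supp r) \<iota> L) (\<iota> ` supp r \<sigma>) {Vt \<sigma>}"
proof -
  define F where "F = Field (T r)"
  define S where "S = supp r"
  have lo: "Linear_order r" using assms(2) unfolding BH_system_def by simp
  have "\<forall>r. Linear_order r \<longrightarrow> Linear_order (T r)" using assms(1) unfolding prae_dilator_def by (rule conjunct1)
  then have loT: "Linear_order (T r)" using lo by blast
  have fs: "finite (S \<sigma>) \<and> S \<sigma> \<subseteq> Field r" if "\<sigma> \<in> F" for \<sigma>
    using assms(1) lo that unfolding prae_dilator_def F_def S_def by blast
  have A1: "\<forall>\<sigma>\<in>F. \<forall>x\<in>S \<sigma>. \<iota> x \<in> Vt ` F \<and> Lth S L (\<iota> x) < Lth S L (Vt \<sigma>)"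
  proof (intro ballI)
    fix \<sigma> x assume s: "\<sigma> \<in> F" and x: "x \<in> S \<sigma>"
    have xf: "x \<in> Field r" using fs[OF s] x by blast
    have "\<iota> x \<in> Vt ` F" "Lth S L (\<iota> x) = L x"
      using assms(2) xf unfolding BH_system_def F_def S_def by auto
    moreover have "L x \<le> Max (L ` S \<sigma>)" using fs[OF s] x by simp
    ultimately show "\<iota> x \<in> Vt ` F \<and> Lth S L (\<iota> x) < Lth S L (Vt \<sigma>)"
      unfolding Lth_def using x by auto
  qed
  have tot: "\<forall>\<sigma>\<in>F. \<forall>\<rho>\<in>F. \<sigma> \<noteq> \<rho> \<longrightarrow> (\<sigma>, \<rho>) \<in> T r \<or> (\<rho>, \<sigma>) \<in> T r"
    using loT unfolding F_def linear_order_on_def total_on_def by blast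
  note M = main[OF A1 tot]
  have stabt: "theta_less (T r) S \<iota> L c d = th_less_fuel k (T r) S \<iota> c d"
    if "c \<in> Vt ` F" "d \<in> Vt ` F" "Lth S L c + Lth S L d < k" for c d k
    unfolding theta_less_def using stab[OF A1, of "Lth S L c + Lth S L d + 1" "T r"] that by auto
  show ?thesis
  proof (intro ballI conjI impI)
    fix \<sigma> \<tau> assume s: "\<sigma> \<in> Field (T r)" and t: "\<tau> \<in> Field (T r)"
    show "fin_less (theta_less (T r) (supp r) \<iota> L) (\<iota> ` supp r \<sigma>) {Vt \<sigma>}"
      unfolding fin_less_def S_def[symmetric]
    proof
      fix u assume "u \<in> \<iota> ` S \<sigma>"
      then obtain x where x: "x \<in> S \<sigma>" "u = \<iota> x" by blast
      have "hsub F S \<iota> (\<iota> x) (Vt \<sigma>)" using hsub.base[of \<sigma> F x S \<iota>] s x unfolding F_def by blast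
      then have "theta_less (T r) S \<iota> L u (Vt \<sigma>)" using M x by blast
      then show "\<exists>t\<in>{Vt \<sigma>}. theta_less (T r) S \<iota> L u t" by simp
    qed
    assume h: "(\<sigma>, \<tau>) \<in> T r \<and> \<sigma> \<noteq> \<tau> \<and> fin_less (theta_less (T r) (supp r) \<iota> L) (\<iota> ` supp r \<sigma>) {Vt \<tau>}"
    let ?n = "Lth S L (Vt \<sigma>) + Lth S L (Vt \<tau>)"
    have "fin_less (th_less_fuel ?n (T r) S \<iota>) (\<iota> ` S \<sigma>) {Vt \<tau>}"
      unfolding fin_less_def
    proof
      fix u assume u: "u \<in> \<iota> ` S \<sigma>"
      then obtain x where x: "x \<in> S \<sigma>" "u = \<iota> x" by blast
      have "theta_less (T r) S \<iota> L u (Vt \<tau>)" using h u unfolding fin_less_def S_def by auto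
      moreover have "u \<in> Vt ` F" "Lth S L u < Lth S L (Vt \<sigma>)" using A1 s x F_def by auto
      ultimately have "th_less_fuel ?n (T r) S \<iota> u (Vt \<tau>)"
        using stabt[of u "Vt \<tau>" ?n] t F_def by simp
      then show "\<exists>t\<in>{Vt \<tau>}. th_less_fuel ?n (T r) S \<iota> u t" by simp
    qed
    then show "theta_less (T r) (supp r) \<iota> L (Vt \<sigma>) (Vt \<tau>)"
      unfolding theta_less_def S_def[symmetric] using h by simp
  qed
qed

end
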